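(* For each $i\in\{1,\dots,n\}$ let $D_i\in\mathbb{R}^{d\times m}$, let $\Gamma_i\in\mathbb{R}^{m\times m}$ be diagonal with entries in $\{0,1\}$, let $\mathcal{B}_i(\cdot)$ be the feature-lifting of a linear basis warp, $Z_i$ its regularization matrix and $\mu_i\ge0$, such that $M_i=\mathcal{B}_i(D_i)\Gamma_i\Gamma_i\mathcal{B}_i(D_i)^{\top}+\mu_iZ_i^{\top}Z_i$ is invertible. Let $\mathcal{P}_{III}=\sum_{i=1}^n\big(\Gamma_i-\Gamma_i\mathcal{B}_i(D_i)^{\top}M_i^{-1}\mathcal{B}_i(D_i)\Gamma_i\big)$. Let $D_i'=R_iD_i+t_i\mathbf{1}^{\top}$ for rotations $R_i$ and translations $t_i$, and let $Z_i'$ be the regularization matrix used for the transformed shapes. If for each $i$ there exists an invertible matrix $H_i$ with $\mathcal{B}_i(D_i')=H_i\mathcal{B}_i(D_i)$ and $Z_i'=Z_iH_i^{\top}$, then $\mathcal{P}_{III}$ computed from $(D_i',Z_i')$ equals $\mathcal{P}_{III}$ computed from $(D_i,Z_i)$, and hence the optimal reference shape $S$ of problem (III) (for fixed $\Lambda$ and $\nu$) is the same.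
   Context: Problem (III): given a diagonal $\Lambda\in\mathbb{R}^{d\times d}$ and $\nu\ge0$, $$\min_{W_i\in\mathbb{R}^{l_i\times d},\,S\in\mathbb{R}^{d\times m}}\ \sum_{i=1}^n\|W_i^{\top}\mathcal{B}_i(D_i)\Gamma_i-S\Gamma_i\|_F^2+\sum_{i=1}^n\mu_i\|Z_iW_i\|_F^2+\nu\|S\mathbf{1}\|_2^2\quad\text{s.t.}\quad SS^{\top}=\Lambda.$$ A linear basis warp with feature map $\beta:\mathbb{R}^d\to\mathbb{R}^l$ maps $p\mapsto W^{\top}\beta(p)$; $\mathcal{B}(D)=[\beta(p_1),\dots,\beta(p_m)]$ for $D=[p_1,\dots,p_m]$. $\mathbf{1}\in\mathbb{R}^m$ is the all-ones vector. *)

theory Defs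
  imports "Jordan_Normal_Form.Determinant"
begin

(* Feature lifting of a linear basis warp: B(D) = [beta(p_1),...,beta(p_m)] (an l x m matrix) *)
definition lift :: "nat \<Rightarrow> (real vec \<Rightarrow> real vec) \<Rightarrow> real mat \<Rightarrow> real mat" where
  "lift l \<beta> D = mat l (dim_col D) (\<lambda>(r,c). \<beta> (col D c) $ r)"

definition minv :: "real mat \<Rightarrow> real mat" where
  "minv A = (SOME B. B \<in> carrier_mat (dim_row A) (dim_row A) \<and> inverts_mat A B \<and> inverts_mat B A)"

definition frob2 :: "real mat \<Rightarrow> real" where
  "frob2 A = (\<Sum>r<dim_row A. \<Sum>c<dim_col A. (A $$ (r,c))^2)"

definition rotation_mat :: "nat \<Rightarrow> real mat \<Rightarrow> bool" where
  "rotation_mat d R \<longleftrightarrow> R \<in> carrier_mat d d \<and> transpose_mat R * R = 1\<^sub>m d \<and> det R = 1"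

definition bcast :: "nat \<Rightarrow> real vec \<Rightarrow> real mat" where
  "bcast m t = mat (dim_vec t) m (\<lambda>(r,c). t $ r)"

definition Mmat :: "real mat \<Rightarrow> real mat \<Rightarrow> real \<Rightarrow> real mat \<Rightarrow> real mat" where
  "Mmat B \<Gamma> \<mu> Z = B * \<Gamma> * \<Gamma> * transpose_mat B + \<mu> \<cdot>\<^sub>m (transpose_mat Z * Z)"

definition Pterm :: "real mat \<Rightarrow> real mat \<Rightarrow> real \<Rightarrow> real mat \<Rightarrow> real mat" where
  "Pterm B \<Gamma> \<mu> Z = \<Gamma> - \<Gamma> * transpose_mat B * minv (Mmat B \<Gamma> \<mu> Z) * B * \<Gamma>"

definition PIII :: "nat \<Rightarrow> nat \<Rightarrow> (nat \<Rightarrow> real mat) \<Rightarrow> (nat \<Rightarrow> real mat) \<Rightarrow> (nat \<Rightarrow> real)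
    \<Rightarrow> (nat \<Rightarrow> real mat) \<Rightarrow> real mat" where
  "PIII n m B \<Gamma> \<mu> Z = mat m m (\<lambda>rc. \<Sum>i\<in>{1..n}. Pterm (B i) (\<Gamma> i) (\<mu> i) (Z i) $$ rc)"

(* objective of problem (III); B i = lifted data B_i(D_i) *)
definition objIII :: "nat \<Rightarrow> nat \<Rightarrow> (nat \<Rightarrow> real mat) \<Rightarrow> (nat \<Rightarrow> real mat) \<Rightarrow> (nat \<Rightarrow> real)
    \<Rightarrow> (nat \<Rightarrow> real mat) \<Rightarrow> real \<Rightarrow> (nat \<Rightarrow> real mat) \<Rightarrow> real mat \<Rightarrow> real" where
  "objIII n m B \<Gamma> \<mu> Z \<nu> W S =
     (\<Sum>i\<in>{1..n}. frob2 (transpose_mat (W i) * B i * \<Gamma> i - S * \<Gamma> i))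
   + (\<Sum>i\<in>{1..n}. \<mu> i * frob2 (Z i * W i))
   + \<nu> * (\<Sum>r<dim_row S. (\<Sum>c<m. S $$ (r,c))^2)"

definition feasIII :: "nat \<Rightarrow> nat \<Rightarrow> nat \<Rightarrow> (nat \<Rightarrow> nat) \<Rightarrow> real mat \<Rightarrow> (nat \<Rightarrow> real mat) \<Rightarrow> real mat \<Rightarrow> bool" where
  "feasIII n d m l \<Lambda> W S \<longleftrightarrow> (\<forall>i\<in>{1..n}. W i \<in> carrier_mat (l i) d)
      \<and> S \<in> carrier_mat d m \<and> S * transpose_mat S = \<Lambda>"

definition optS_III :: "nat \<Rightarrow> nat \<Rightarrow> nat \<Rightarrow> (nat \<Rightarrow> nat) \<Rightarrow> (nat \<Rightarrow> real mat) \<Rightarrow> (nat \<Rightarrow> real mat)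
    \<Rightarrow> (nat \<Rightarrow> real) \<Rightarrow> (nat \<Rightarrow> real mat) \<Rightarrow> real mat \<Rightarrow> real \<Rightarrow> real mat set" where
  "optS_III n d m l B \<Gamma> \<mu> Z \<Lambda> \<nu> = {S. \<exists>W. feasIII n d m l \<Lambda> W S \<and>
      (\<forall>W' S'. feasIII n d m l \<Lambda> W' S' \<longrightarrow>
         objIII n m B \<Gamma> \<mu> Z \<nu> W S \<le> objIII n m B \<Gamma> \<mu> Z \<nu> W' S')}"

end

theory Submission
  imports Defs
begin

lemma minv_props:
  assumes A: "A \<in> carrier_mat n n" and inv: "invertible_mat A"
  shows "minv A \<in> carrier_mat n n" "A * minv A = 1\<^sub>m n" "minv A * A = 1\<^sub>m n"
proof -
  obtain B where B: "inverts_mat A B" "inverts_mat B A" using inv unfolding invertible_mat_def by blast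
  have "A * B = 1\<^sub>m n" using B(1) A unfolding inverts_mat_def by auto
  hence "dim_col B = n" by (metis index_mult_mat(3) index_one_mat(3))
  have "B * A = 1\<^sub>m (dim_row B)" using B(2) unfolding inverts_mat_def by auto
  hence "dim_row B = n" using A by (metis carrier_matD(2) index_mult_mat(3) index_one_mat(3))
  have ex: "\<exists>B. B \<in> carrier_mat (dim_row A) (dim_row A) \<and> inverts_mat A B \<and> inverts_mat B A"
    using B A \<open>dim_col B = n\<close> \<open>dim_row B = n\<close> by auto
  have "minv A \<in> carrier_mat (dim_row A) (dim_row A) \<and> inverts_mat A (minv A) \<and> inverts_mat (minv A) A"
    unfolding minv_def by (rule someI_ex[OF ex])
  thus "minv A \<in> carrier_mat n n" "A * minv A = 1\<^sub>m n" "minv A * A = 1\<^sub>m n"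
    using A unfolding inverts_mat_def by auto
qed

lemma minv_unique:
  assumes A: "A \<in> carrier_mat n n" and Y: "Y \<in> carrier_mat n n" and inv: "invertible_mat A"
    and AY: "A * Y = 1\<^sub>m n"
  shows "minv A = Y"
proof -
  note P = minv_props[OF A inv]
  have "minv A = minv A * (A * Y)" using P(1) AY by simp
  also have "\<dots> = (minv A * A) * Y" using P(1) A Y by simp
  also have "\<dots> = Y" using P(3) Y by simp
  finally show ?thesis .
qed

lemma assoc_dim: "dim_col A = dim_row B \<Longrightarrow> dim_col B = dim_row C \<Longrightarrow> A * (B * C) = A * B * C"
  by (rule assoc_mult_mat[symmetric, of A "dim_row A" "dim_col A" B "dim_col B" C "dim_col C"]) auto

lemma key:
  assumes B: "B \<in> carrier_mat l m" and G: "\<Gamma> \<in> carrier_mat m m" and Z: "Z \<in> carrier_mat k l"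
    and H: "H \<in> carrier_mat l l" and Hi: "invertible_mat H"
    and Mi: "invertible_mat (Mmat B \<Gamma> \<mu> Z)"
  shows "Pterm (H * B) \<Gamma> \<mu> (Z * transpose_mat H) = Pterm B \<Gamma> \<mu> Z"
proof -
  define M where "M = Mmat B \<Gamma> \<mu> Z"
  have Mc: "M \<in> carrier_mat l l" unfolding M_def Mmat_def using B G Z by auto
  note MP = minv_props[OF Mc Mi[folded M_def]]
  note HP = minv_props[OF H Hi]
  define Hv where "Hv = minv H"
  have Hvc: "Hv \<in> carrier_mat l l" using HP Hv_def by auto
  define Mv where "Mv = minv M"
  have Mvc: "Mv \<in> carrier_mat l l" using MP Mv_def by auto
  have HT: "transpose_mat H * transpose_mat Hv = 1\<^sub>m l"
    using HP(3) H Hvc by (metis Hv_def transpose_mult transpose_one)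
  have HT2: "transpose_mat Hv * transpose_mat H = 1\<^sub>m l"
    using HP(2) H Hvc by (metis Hv_def transpose_mult transpose_one)
  have t1: "transpose_mat (H * B) = transpose_mat B * transpose_mat H" using transpose_mult[OF H B] .
  have M': "Mmat (H * B) \<Gamma> \<mu> (Z * transpose_mat H) = H * M * transpose_mat H"
  proof -
    have t2: "transpose_mat (Z * transpose_mat H) = H * transpose_mat Z"
      using transpose_mult[of Z k l "transpose_mat H" l] Z H by simp
    have HBc: "H * B * \<Gamma> * \<Gamma> \<in> carrier_mat l m" using H B G by auto
    have e1: "H * B * \<Gamma> * \<Gamma> * (transpose_mat B * transpose_mat H) = H * (B * \<Gamma> * \<Gamma> * transpose_mat B) * transpose_mat H"
      using H B G by (simp add: assoc_dim del: assoc_mult_mat)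
    have e2: "(H * transpose_mat Z) * (Z * transpose_mat H) = H * (transpose_mat Z * Z) * transpose_mat H"
      using H Z by (simp add: assoc_dim del: assoc_mult_mat)
    have X: "B * \<Gamma> * \<Gamma> * transpose_mat B \<in> carrier_mat l l" using B G by auto
    have Y: "transpose_mat Z * Z \<in> carrier_mat l l" using Z by auto
    have "H * M * transpose_mat H = H * (B * \<Gamma> * \<Gamma> * transpose_mat B) * transpose_mat H
        + \<mu> \<cdot>\<^sub>m (H * (transpose_mat Z * Z) * transpose_mat H)"
      unfolding M_def Mmat_def
      using H X Y
      by (simp add: mult_add_distrib_mat[OF H X] add_mult_distrib_mat[of _ l l _ _ l] mult_smult_distrib[OF H Y]
          mult_smult_assoc_mat[of _ l l _ l])
    thus ?thesis unfolding Mmat_def t1 t2 e1[symmetric] e2[symmetric] M_def by simp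
  qed
  have M'c: "H * M * transpose_mat H \<in> carrier_mat l l" using H Mc by auto
  define Y where "Y = transpose_mat Hv * Mv * Hv"
  have Yc: "Y \<in> carrier_mat l l" unfolding Y_def using Hvc Mvc by auto
  have HHv: "H * Hv = 1\<^sub>m l" "Hv * H = 1\<^sub>m l" using HP Hv_def by auto
  have MMv: "M * Mv = 1\<^sub>m l" "Mv * M = 1\<^sub>m l" using MP Mv_def by auto
  have "H * M * transpose_mat H * Y = H * M * (transpose_mat H * transpose_mat Hv) * Mv * Hv"
    unfolding Y_def using H Mc Hvc Mvc by (simp add: assoc_dim del: assoc_mult_mat)
  also have "\<dots> = H * (M * Mv) * Hv" using H Mc Hvc Mvc by (simp add: HT assoc_dim del: assoc_mult_mat)
  also have "\<dots> = 1\<^sub>m l" using H Mc Hvc Mvc by (simp add: MMv HHv)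
  finally have P1: "H * M * transpose_mat H * Y = 1\<^sub>m l" .
  have "Y * (H * M * transpose_mat H) = transpose_mat Hv * Mv * (Hv * H) * M * transpose_mat H"
    unfolding Y_def using H Mc Hvc Mvc by (simp add: assoc_dim del: assoc_mult_mat)
  also have "\<dots> = transpose_mat Hv * (Mv * M) * transpose_mat H" using H Mc Hvc Mvc by (simp add: HHv assoc_dim del: assoc_mult_mat)
  also have "\<dots> = 1\<^sub>m l" using H Mc Hvc Mvc by (simp add: MMv HT2)
  finally have P2: "Y * (H * M * transpose_mat H) = 1\<^sub>m l" .
  have inv': "invertible_mat (H * M * transpose_mat H)"
    unfolding invertible_mat_def inverts_mat_def using M'c Yc P1 P2 by (metis carrier_matD(1) carrier_matD(2) square_mat.simps)
  have mi: "minv (Mmat (H * B) \<Gamma> \<mu> (Z * transpose_mat H)) = Y"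
    unfolding M' by (rule minv_unique[OF M'c Yc inv' P1])
  have "\<Gamma> * transpose_mat (H * B) * Y * (H * B) * \<Gamma> = \<Gamma> * transpose_mat B * (transpose_mat H * transpose_mat Hv) * Mv * (Hv * H) * B * \<Gamma>"
    unfolding Y_def t1 using H B G Hvc Mvc by (simp add: assoc_dim del: assoc_mult_mat)
  also have "\<dots> = \<Gamma> * transpose_mat B * Mv * B * \<Gamma>"
    using H B G Hvc Mvc by (simp add: HT HHv)
  finally show ?thesis unfolding Pterm_def mi Mv_def M_def by simp
qed

lemma opt_transfer:
  assumes fa: "\<And>W S. feas W S \<Longrightarrow> feas (f W) S \<and> obj' W S = obj (f W) S"
    and ga: "\<And>W S. feas W S \<Longrightarrow> feas (g W) S \<and> f (g W) = W"
  shows "{S. \<exists>W. feas W S \<and> (\<forall>W' S'. feas W' S' \<longrightarrow> (obj' W S::real) \<le> obj' W' S')}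
       = {S. \<exists>W. feas W S \<and> (\<forall>W' S'. feas W' S' \<longrightarrow> obj W S \<le> obj W' S')}"
proof -
  have A: "\<exists>W. feas W S \<and> (\<forall>W' S'. feas W' S' \<longrightarrow> obj W S \<le> obj W' S')"
    if "\<exists>W. feas W S \<and> (\<forall>W' S'. feas W' S' \<longrightarrow> obj' W S \<le> obj' W' S')" for S
  proof -
  from that obtain W where W: "feas W S" "\<forall>W' S'. feas W' S' \<longrightarrow> obj' W S \<le> obj' W' S'" by blast
  show "\<exists>W. feas W S \<and> (\<forall>W' S'. feas W' S' \<longrightarrow> obj W S \<le> obj W' S')"
  proof (intro exI conjI allI impI)
    show "feas (f W) S" using fa W by blast
    fix W' S' assume F: "feas W' S'"
    have "obj (f W) S = obj' W S" using fa W by simp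
    also have "\<dots> \<le> obj' (g W') S'" using W ga F by blast
    also have "\<dots> = obj W' S'" using fa[of "g W'" S'] ga[OF F] by simp
    finally show "obj (f W) S \<le> obj W' S'" .
  qed
  qed
  have B: "\<exists>W. feas W S \<and> (\<forall>W' S'. feas W' S' \<longrightarrow> obj' W S \<le> obj' W' S')"
    if "\<exists>W. feas W S \<and> (\<forall>W' S'. feas W' S' \<longrightarrow> obj W S \<le> obj W' S')" for S
  proof -
  from that obtain W where W: "feas W S" "\<forall>W' S'. feas W' S' \<longrightarrow> obj W S \<le> obj W' S'" by blast
  show "\<exists>W. feas W S \<and> (\<forall>W' S'. feas W' S' \<longrightarrow> obj' W S \<le> obj' W' S')"
  proof (intro exI conjI allI impI)
    show "feas (g W) S" using ga W by blast
    fix W' S' assume F: "feas W' S'"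
    have "obj' (g W) S = obj W S" using fa[of "g W" S] ga W by simp
    also have "\<dots> \<le> obj (f W') S'" using W fa F by blast
    also have "\<dots> = obj' W' S'" using fa[OF F] by simp
    finally show "obj' (g W) S \<le> obj' W' S'" .
  qed
  qed
  show ?thesis using A B by blast
qed

theorem lemma6:
  fixes n d m :: nat and l k :: "nat \<Rightarrow> nat"
    and D \<Gamma> Z Z' R H :: "nat \<Rightarrow> real mat" and t :: "nat \<Rightarrow> real vec"
    and \<beta> :: "nat \<Rightarrow> real vec \<Rightarrow> real vec" and \<mu> :: "nat \<Rightarrow> real"
  assumes D: "\<And>i. i \<in> {1..n} \<Longrightarrow> D i \<in> carrier_mat d m"
    and Gam: "\<And>i. i \<in> {1..n} \<Longrightarrow> \<Gamma> i \<in> carrier_mat m m \<and> diagonal_mat (\<Gamma> i)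
                 \<and> (\<forall>j<m. \<Gamma> i $$ (j,j) \<in> {0,1})"
    and beta: "\<And>i p. i \<in> {1..n} \<Longrightarrow> p \<in> carrier_vec d \<Longrightarrow> \<beta> i p \<in> carrier_vec (l i)"
    and Z: "\<And>i. i \<in> {1..n} \<Longrightarrow> Z i \<in> carrier_mat (k i) (l i)"
    and mu: "\<And>i. i \<in> {1..n} \<Longrightarrow> \<mu> i \<ge> 0"
    and M_inv: "\<And>i. i \<in> {1..n} \<Longrightarrow>
                  invertible_mat (Mmat (lift (l i) (\<beta> i) (D i)) (\<Gamma> i) (\<mu> i) (Z i))"
    and R: "\<And>i. i \<in> {1..n} \<Longrightarrow> rotation_mat d (R i)"
    and t: "\<And>i. i \<in> {1..n} \<Longrightarrow> t i \<in> carrier_vec d"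
    and H: "\<And>i. i \<in> {1..n} \<Longrightarrow> H i \<in> carrier_mat (l i) (l i) \<and> invertible_mat (H i)
              \<and> lift (l i) (\<beta> i) (R i * D i + bcast m (t i)) = H i * lift (l i) (\<beta> i) (D i)
              \<and> Z' i = Z i * transpose_mat (H i)"
  shows "PIII n m (\<lambda>i. lift (l i) (\<beta> i) (R i * D i + bcast m (t i))) \<Gamma> \<mu> Z'
           = PIII n m (\<lambda>i. lift (l i) (\<beta> i) (D i)) \<Gamma> \<mu> Z
         \<and> (\<forall>\<Lambda> (\<nu>::real). \<Lambda> \<in> carrier_mat d d \<longrightarrow> diagonal_mat \<Lambda> \<longrightarrow> \<nu> \<ge> 0 \<longrightarrow>
              optS_III n d m l (\<lambda>i. lift (l i) (\<beta> i) (R i * D i + bcast m (t i))) \<Gamma> \<mu> Z' \<Lambda> \<nu>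
              = optS_III n d m l (\<lambda>i. lift (l i) (\<beta> i) (D i)) \<Gamma> \<mu> Z \<Lambda> \<nu>)"
proof -
  have Hc: "H i \<in> carrier_mat (l i) (l i)" and Hi: "invertible_mat (H i)"
    and Heq: "lift (l i) (\<beta> i) (R i * D i + bcast m (t i)) = H i * lift (l i) (\<beta> i) (D i)"
    and Zeq: "Z' i = Z i * transpose_mat (H i)" if i: "i \<in> {1..n}" for i
    using H[OF i] by blast+
  have Bc: "lift (l i) (\<beta> i) (D i) \<in> carrier_mat (l i) m" if "i \<in> {1..n}" for i
    using D[OF that] unfolding lift_def by auto
  have Pt: "Pterm (lift (l i) (\<beta> i) (R i * D i + bcast m (t i))) (\<Gamma> i) (\<mu> i) (Z' i)
      = Pterm (lift (l i) (\<beta> i) (D i)) (\<Gamma> i) (\<mu> i) (Z i)" if i: "i \<in> {1..n}" for i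
    unfolding Heq[OF i] Zeq[OF i] using key[OF Bc[OF i] _ Z[OF i] Hc[OF i] Hi[OF i] M_inv[OF i]] Gam[OF i] by blast
  have part1: "PIII n m (\<lambda>i. lift (l i) (\<beta> i) (R i * D i + bcast m (t i))) \<Gamma> \<mu> Z'
           = PIII n m (\<lambda>i. lift (l i) (\<beta> i) (D i)) \<Gamma> \<mu> Z"
    unfolding PIII_def using Pt by (intro cong_mat refl sum.cong) auto
  show ?thesis
  proof (intro conjI allI impI part1)
    fix \<Lambda> and \<nu> :: real
    define f where "f W = (\<lambda>i. if i \<in> {1..n} then transpose_mat (H i) * W i else W i)" for W :: "nat \<Rightarrow> real mat"
    define g where "g W = (\<lambda>i. if i \<in> {1..n} then transpose_mat (minv (H i)) * W i else W i)" for W :: "nat \<Rightarrow> real mat"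
    show "optS_III n d m l (\<lambda>i. lift (l i) (\<beta> i) (R i * D i + bcast m (t i))) \<Gamma> \<mu> Z' \<Lambda> \<nu>
              = optS_III n d m l (\<lambda>i. lift (l i) (\<beta> i) (D i)) \<Gamma> \<mu> Z \<Lambda> \<nu>"
      unfolding optS_III_def
    proof (rule opt_transfer[where f=f and g=g])
      fix W S assume F: "feasIII n d m l \<Lambda> W S"
      have Wc: "W i \<in> carrier_mat (l i) d" if "i \<in> {1..n}" for i using F that unfolding feasIII_def by auto
      show "feasIII n d m l \<Lambda> (f W) S \<and> objIII n m (\<lambda>i. lift (l i) (\<beta> i) (R i * D i + bcast m (t i))) \<Gamma> \<mu> Z' \<nu> W S =
         objIII n m (\<lambda>i. lift (l i) (\<beta> i) (D i)) \<Gamma> \<mu> Z \<nu> (f W) S"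
      proof
        have "f W i \<in> carrier_mat (l i) d" if i: "i \<in> {1..n}" for i
          using Hc[OF i] Wc[OF i] i unfolding f_def by simp
        thus "feasIII n d m l \<Lambda> (f W) S" using F unfolding feasIII_def by auto
        have e1: "transpose_mat (W i) * lift (l i) (\<beta> i) (R i * D i + bcast m (t i)) * \<Gamma> i
            = transpose_mat (f W i) * lift (l i) (\<beta> i) (D i) * \<Gamma> i" if i: "i \<in> {1..n}" for i
        proof -
          have "transpose_mat (transpose_mat (H i) * W i) = transpose_mat (W i) * H i"
            using transpose_mult[of "transpose_mat (H i)" "l i" "l i" "W i" d] Hc[OF i] Wc[OF i] by simp
          moreover have "transpose_mat (W i) * (H i * lift (l i) (\<beta> i) (D i)) = transpose_mat (W i) * H i * lift (l i) (\<beta> i) (D i)"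
            using Hc[OF i] Wc[OF i] Bc[OF i] by (subst assoc_mult_mat[of "transpose_mat (W i)" d "l i" "H i" "l i" _ m]) auto
          ultimately show ?thesis unfolding f_def Heq[OF i] using i by simp
        qed
        have e2: "Z' i * W i = Z i * f W i" if i: "i \<in> {1..n}" for i
        proof -
          have "Z i * transpose_mat (H i) * W i = Z i * (transpose_mat (H i) * W i)"
            by (rule assoc_mult_mat[OF Z[OF i] _ Wc[OF i]]) (use Hc[OF i] in simp)
          moreover have "Z' i = Z i * transpose_mat (H i)" using Zeq[OF i] .
          moreover have "f W i = transpose_mat (H i) * W i" using i unfolding f_def by simp
          ultimately show ?thesis by simp
        qed
        show "objIII n m (\<lambda>i. lift (l i) (\<beta> i) (R i * D i + bcast m (t i))) \<Gamma> \<mu> Z' \<nu> W S =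
         objIII n m (\<lambda>i. lift (l i) (\<beta> i) (D i)) \<Gamma> \<mu> Z \<nu> (f W) S"
          unfolding objIII_def using e1 e2 by (intro arg_cong2[where f="(+)"] arg_cong2[where f="(+)"] sum.cong refl) auto
      qed
    next
      fix W S assume F: "feasIII n d m l \<Lambda> W S"
      have Wc: "W i \<in> carrier_mat (l i) d" if "i \<in> {1..n}" for i using F that unfolding feasIII_def by auto
      have Hv: "minv (H i) \<in> carrier_mat (l i) (l i)" "minv (H i) * H i = 1\<^sub>m (l i)" if i: "i \<in> {1..n}" for i
        using minv_props[OF Hc[OF i] Hi[OF i]] by auto
      have HT: "transpose_mat (H i) * transpose_mat (minv (H i)) = 1\<^sub>m (l i)" if i: "i \<in> {1..n}" for i
        using transpose_mult[OF Hv(1)[OF i] Hc[OF i]] Hv(2)[OF i] by simp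
      show "feasIII n d m l \<Lambda> (g W) S \<and> f (g W) = W"
      proof
        have "g W i \<in> carrier_mat (l i) d" if i: "i \<in> {1..n}" for i
          using Hv(1)[OF i] Wc[OF i] i unfolding g_def by simp
        thus "feasIII n d m l \<Lambda> (g W) S" using F unfolding feasIII_def by auto
        show "f (g W) = W"
        proof
          fix i show "f (g W) i = W i"
          proof (cases "i \<in> {1..n}")
            case True
            have "transpose_mat (H i) * (transpose_mat (minv (H i)) * W i)
               = (transpose_mat (H i) * transpose_mat (minv (H i))) * W i"
              using Hv(1)[OF True] Hc[OF True] Wc[OF True] by (subst assoc_mult_mat[of _ "l i" "l i" _ "l i" _ d]) auto
            also have "\<dots> = W i" using HT[OF True] Wc[OF True] by simp
            finally show ?thesis unfolding f_def g_def using True by simp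
          next
            case False
            thus ?thesis unfolding f_def g_def by auto
          qed
        qed
      qed
    qed
  qed
qed

end
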